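(* Let $(\mathcal{C},P)$ be a primary doctrine with comprehension and negation. Then: (i) $(\mathcal{C},P)$ has co-comprehension, given by $\lceil\alpha\rceil:=\lfloor\neg\alpha\rfloor:\{\neg\alpha\}\to A$; (ii) if $(\mathcal{C},P)$ is a restricted $\Sigma(\mathcal{C}_P)$-doctrine, then it is also a restricted $\Sigma(\mathcal{C}_P^o)$-doctrine; (iii) if $(\mathcal{C},P)$ has full comprehension, then $(\mathcal{C},P)$ has full co-comprehension if and only if it is classical.
   Context: A doctrine is a pair $(\mathcal{C},P)$, $\mathcal{C}$ a category with finite products, $P:\mathcal{C}^{op}\to\mathbf{Pos}$ a functor, $f^*=P(f)$; primary means each $P(A)$ has binary meets preserved by each $f^*$. It has negation if each $P(A)$ has a bottom $\bot_A$ and an operation $\neg:P(A)\to P(A)$ with $\alpha\le\neg\beta$ iff $\alpha\wedge\beta=\bot_A$; reindexing maps are understood to preserve top, bottom and negation ($f^*\neg\alpha=\neg f^*\alpha$). It is classical if moreover $\neg\neg\alpha=\alpha$. Comprehension: every $P(A)$ has a top $\top_A$ and for each $\alpha\in P(A)$ there is $\lfloor\alpha\rfloor:\{\alpha\}\to A$ with $\lfloor\alpha\rfloor^*\alpha=\top$ such that every $f:Y\to A$ with $f^*\alpha=\top_Y$ factors uniquely through $\lfloor\alpha\rfloor$; full if whenever $\lfloor\alpha\rfloor$ factors through $\lfloor\beta\rfloor$ then $\alpha\le\beta$. Co-comprehension: every $P(A)$ has a bottom $\bot_A$ and for each $\alpha\in P(A)$ there is $\lceil\alpha\rceil:\{\alpha\}^o\to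 A$ with $\lceil\alpha\rceil^*\alpha=\bot$ such that every $f:Y\to A$ with $f^*\alpha=\bot_Y$ factors uniquely as $f=\lceil\alpha\rceil k$; these arrows are monic and $\alpha\le\beta$ implies $\lceil\beta\rceil$ factors through $\lceil\alpha\rceil$; co-comprehension is full if conversely whenever $\lceil\beta\rceil$ factors through $\lceil\alpha\rceil$ then $\alpha\le\beta$. $\mathcal{C}_P$ (resp. $\mathcal{C}_P^o$) is the pullback-stable class of arrows of the form $\lfloor\alpha\rfloor$ (resp. $\lceil\alpha\rceil$). For a pullback-stable class $\mathcal{A}$, a restricted $\Sigma(\mathcal{A})$-doctrine is one where each $f^*$ with $f:A\to B$ in $\mathcal{A}$ has a left adjoint $\Sigma_f$ (i.e. $\alpha\le f^*\Sigma_f\alpha$, $\Sigma_ff^*\beta\le\beta$) and for every pullback square $h\circ g=f\circ k$ and every $\xi\in P(B)$, $h^*\Sigma_ff^*\xi=\Sigma_gk^*f^*\xi$. *)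

theory Defs
  imports Main
begin

text \<open>A category is given by objects of type 'o, arrows of type 'a (every element of
 'a is an arrow), domain/codomain, composition (comp g f = g after f, defined when
 cod f = dom g) and identities.  A functor P : C^op -> Pos is given by a carrier
 set PA A of type 'p for each object, a partial order le A on it, and reindexing
 re f : P(cod f) -> P(dom f).\<close>

record ('o, 'a, 'p) doctrine =
  dm   :: "'a \<Rightarrow> 'o"
  cd   :: "'a \<Rightarrow> 'o"
  comp :: "'a \<Rightarrow> 'a \<Rightarrow> 'a"
  idt  :: "'o \<Rightarrow> 'a"
  PA   :: "'o \<Rightarrow> 'p set"
  le   :: "'o \<Rightarrow> 'p \<Rightarrow> 'p \<Rightarrow> bool"
  re   :: "'a \<Rightarrow> 'p \<Rightarrow> 'p"

definition is_category :: "('o,'a,'p,'x) doctrine_scheme \<Rightarrow> bool" where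
  "is_category D \<longleftrightarrow>
     (\<forall>A. dm D (idt D A) = A \<and> cd D (idt D A) = A) \<and>
     (\<forall>f g. cd D f = dm D g \<longrightarrow> dm D (comp D g f) = dm D f \<and> cd D (comp D g f) = cd D g) \<and>
     (\<forall>f. comp D f (idt D (dm D f)) = f \<and> comp D (idt D (cd D f)) f = f) \<and>
     (\<forall>f g h. cd D f = dm D g \<longrightarrow> cd D g = dm D h \<longrightarrow>
         comp D h (comp D g f) = comp D (comp D h g) f)"

definition has_finite_products :: "('o,'a,'p,'x) doctrine_scheme \<Rightarrow> bool" where
  "has_finite_products D \<longleftrightarrow>
     (\<exists>T. \<forall>X. \<exists>!t. dm D t = X \<and> cd D t = T) \<and>
     (\<forall>A B. \<exists>Q p1 p2. dm D p1 = Q \<and> cd D p1 = A \<and> dm D p2 = Q \<and> cd D p2 = B \<and>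
        (\<forall>f g. dm D f = dm D g \<and> cd D f = A \<and> cd D g = B \<longrightarrow>
           (\<exists>!h. dm D h = dm D f \<and> cd D h = Q \<and> comp D p1 h = f \<and> comp D p2 h = g)))"

definition is_functor_to_Pos :: "('o,'a,'p,'x) doctrine_scheme \<Rightarrow> bool" where
  "is_functor_to_Pos D \<longleftrightarrow>
     (\<forall>A. (\<forall>x\<in>PA D A. le D A x x) \<and>
          (\<forall>x\<in>PA D A. \<forall>y\<in>PA D A. \<forall>z\<in>PA D A. le D A x y \<longrightarrow> le D A y z \<longrightarrow> le D A x z) \<and>
          (\<forall>x\<in>PA D A. \<forall>y\<in>PA D A. le D A x y \<longrightarrow> le D A y x \<longrightarrow> x = y)) \<and>
     (\<forall>f. \<forall>x\<in>PA D (cd D f). re D f x \<in> PA D (dm D f)) \<and>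
     (\<forall>f. \<forall>x\<in>PA D (cd D f). \<forall>y\<in>PA D (cd D f).
          le D (cd D f) x y \<longrightarrow> le D (dm D f) (re D f x) (re D f y)) \<and>
     (\<forall>A. \<forall>x\<in>PA D A. re D (idt D A) x = x) \<and>
     (\<forall>f g. cd D f = dm D g \<longrightarrow> (\<forall>x\<in>PA D (cd D g). re D (comp D g f) x = re D f (re D g x)))"

definition doctrine :: "('o,'a,'p,'x) doctrine_scheme \<Rightarrow> bool" where
  "doctrine D \<longleftrightarrow> is_category D \<and> has_finite_products D \<and> is_functor_to_Pos D"

definition is_meet :: "('o,'a,'p,'x) doctrine_scheme \<Rightarrow> 'o \<Rightarrow> 'p \<Rightarrow> 'p \<Rightarrow> 'p \<Rightarrow> bool" where
  "is_meet D A x y m \<longleftrightarrow> m \<in> PA D A \<and> le D A m x \<and> le D A m y \<and>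
     (\<forall>z\<in>PA D A. le D A z x \<longrightarrow> le D A z y \<longrightarrow> le D A z m)"

definition is_top :: "('o,'a,'p,'x) doctrine_scheme \<Rightarrow> 'o \<Rightarrow> 'p \<Rightarrow> bool" where
  "is_top D A t \<longleftrightarrow> t \<in> PA D A \<and> (\<forall>z\<in>PA D A. le D A z t)"

definition is_bot :: "('o,'a,'p,'x) doctrine_scheme \<Rightarrow> 'o \<Rightarrow> 'p \<Rightarrow> bool" where
  "is_bot D A b \<longleftrightarrow> b \<in> PA D A \<and> (\<forall>z\<in>PA D A. le D A b z)"

definition primary :: "('o,'a,'p,'x) doctrine_scheme \<Rightarrow> bool" where
  "primary D \<longleftrightarrow> doctrine D \<and>
     (\<forall>A. \<forall>x\<in>PA D A. \<forall>y\<in>PA D A. \<exists>m. is_meet D A x y m) \<and>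
     (\<forall>f x y m. x \<in> PA D (cd D f) \<longrightarrow> y \<in> PA D (cd D f) \<longrightarrow> is_meet D (cd D f) x y m \<longrightarrow>
        is_meet D (dm D f) (re D f x) (re D f y) (re D f m))"

definition has_negation :: "('o,'a,'p,'x) doctrine_scheme \<Rightarrow> ('o \<Rightarrow> 'p \<Rightarrow> 'p) \<Rightarrow> bool" where
  "has_negation D neg \<longleftrightarrow>
     (\<forall>A. \<exists>b. is_bot D A b) \<and>
     (\<forall>A. \<forall>a\<in>PA D A. neg A a \<in> PA D A) \<and>
     (\<forall>A. \<forall>a\<in>PA D A. \<forall>b\<in>PA D A.
        le D A a (neg A b) \<longleftrightarrow> (\<forall>m. is_meet D A a b m \<longrightarrow> is_bot D A m)) \<and>
     (\<forall>f b. is_bot D (cd D f) b \<longrightarrow> is_bot D (dm D f) (re D f b)) \<and>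
     (\<forall>f. \<forall>a\<in>PA D (cd D f). re D f (neg (cd D f) a) = neg (dm D f) (re D f a))"

definition classical :: "('o,'a,'p,'x) doctrine_scheme \<Rightarrow> ('o \<Rightarrow> 'p \<Rightarrow> 'p) \<Rightarrow> bool" where
  "classical D neg \<longleftrightarrow> has_negation D neg \<and> (\<forall>A. \<forall>a\<in>PA D A. neg A (neg A a) = a)"

definition factors_through :: "('o,'a,'p,'x) doctrine_scheme \<Rightarrow> 'a \<Rightarrow> 'a \<Rightarrow> bool" where
  "factors_through D f m \<longleftrightarrow> (\<exists>k. dm D k = dm D f \<and> cd D k = dm D m \<and> comp D m k = f)"

definition is_comprehension :: "('o,'a,'p,'x) doctrine_scheme \<Rightarrow> ('o \<Rightarrow> 'p \<Rightarrow> 'a) \<Rightarrow> bool" where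
  "is_comprehension D cmp \<longleftrightarrow>
     (\<forall>A. \<exists>t. is_top D A t) \<and>
     (\<forall>f t. is_top D (cd D f) t \<longrightarrow> is_top D (dm D f) (re D f t)) \<and>
     (\<forall>A. \<forall>a\<in>PA D A. cd D (cmp A a) = A \<and>
        is_top D (dm D (cmp A a)) (re D (cmp A a) a) \<and>
        (\<forall>f. cd D f = A \<and> is_top D (dm D f) (re D f a) \<longrightarrow>
           (\<exists>!k. dm D k = dm D f \<and> cd D k = dm D (cmp A a) \<and> comp D (cmp A a) k = f)))"

definition full_comprehension :: "('o,'a,'p,'x) doctrine_scheme \<Rightarrow> ('o \<Rightarrow> 'p \<Rightarrow> 'a) \<Rightarrow> bool" where
  "full_comprehension D cmp \<longleftrightarrow> is_comprehension D cmp \<and>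
     (\<forall>A. \<forall>a\<in>PA D A. \<forall>b\<in>PA D A. factors_through D (cmp A a) (cmp A b) \<longrightarrow> le D A a b)"

definition is_monic :: "('o,'a,'p,'x) doctrine_scheme \<Rightarrow> 'a \<Rightarrow> bool" where
  "is_monic D m \<longleftrightarrow> (\<forall>u v. cd D u = dm D m \<longrightarrow> cd D v = dm D m \<longrightarrow> dm D u = dm D v \<longrightarrow>
       comp D m u = comp D m v \<longrightarrow> u = v)"

definition is_cocomprehension :: "('o,'a,'p,'x) doctrine_scheme \<Rightarrow> ('o \<Rightarrow> 'p \<Rightarrow> 'a) \<Rightarrow> bool" where
  "is_cocomprehension D cc \<longleftrightarrow>
     (\<forall>A. \<exists>b. is_bot D A b) \<and>
     (\<forall>A. \<forall>a\<in>PA D A. cd D (cc A a) = A \<and>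
        is_bot D (dm D (cc A a)) (re D (cc A a) a) \<and>
        (\<forall>f. cd D f = A \<and> is_bot D (dm D f) (re D f a) \<longrightarrow>
           (\<exists>!k. dm D k = dm D f \<and> cd D k = dm D (cc A a) \<and> comp D (cc A a) k = f)) \<and>
        is_monic D (cc A a)) \<and>
     (\<forall>A. \<forall>a\<in>PA D A. \<forall>b\<in>PA D A. le D A a b \<longrightarrow> factors_through D (cc A b) (cc A a))"

definition full_cocomprehension :: "('o,'a,'p,'x) doctrine_scheme \<Rightarrow> ('o \<Rightarrow> 'p \<Rightarrow> 'a) \<Rightarrow> bool" where
  "full_cocomprehension D cc \<longleftrightarrow> is_cocomprehension D cc \<and>
     (\<forall>A. \<forall>a\<in>PA D A. \<forall>b\<in>PA D A. factors_through D (cc A b) (cc A a) \<longrightarrow> le D A a b)"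

definition is_iso :: "('o,'a,'p,'x) doctrine_scheme \<Rightarrow> 'a \<Rightarrow> bool" where
  "is_iso D i \<longleftrightarrow> (\<exists>j. dm D j = cd D i \<and> cd D j = dm D i \<and>
       comp D j i = idt D (dm D i) \<and> comp D i j = idt D (cd D i))"

text \<open>The class of arrows of the form cls A a (closed under isomorphism over the
 codomain, so that it is pullback-stable).\<close>
definition arrow_class :: "('o,'a,'p,'x) doctrine_scheme \<Rightarrow> ('o \<Rightarrow> 'p \<Rightarrow> 'a) \<Rightarrow> 'a set" where
  "arrow_class D cls = {m. \<exists>A a i. a \<in> PA D A \<and> is_iso D i \<and> cd D i = dm D (cls A a) \<and>
       comp D (cls A a) i = m}"

definition is_pullback :: "('o,'a,'p,'x) doctrine_scheme \<Rightarrow> 'a \<Rightarrow> 'a \<Rightarrow> 'a \<Rightarrow> 'a \<Rightarrow> bool" where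
  "is_pullback D h g f k \<longleftrightarrow>
     cd D g = dm D h \<and> cd D k = dm D f \<and> dm D g = dm D k \<and> cd D h = cd D f \<and>
     comp D h g = comp D f k \<and>
     (\<forall>u v. dm D u = dm D v \<and> cd D u = dm D h \<and> cd D v = dm D f \<and> comp D h u = comp D f v \<longrightarrow>
        (\<exists>!w. dm D w = dm D u \<and> cd D w = dm D g \<and> comp D g w = u \<and> comp D k w = v))"

definition restricted_sigma :: "('o,'a,'p,'x) doctrine_scheme \<Rightarrow> 'a set \<Rightarrow> ('a \<Rightarrow> 'p \<Rightarrow> 'p) \<Rightarrow> bool" where
  "restricted_sigma D Cls sig \<longleftrightarrow>
     (\<forall>f\<in>Cls.
        (\<forall>a\<in>PA D (dm D f). sig f a \<in> PA D (cd D f)) \<and>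
        (\<forall>a\<in>PA D (dm D f). \<forall>b\<in>PA D (dm D f). le D (dm D f) a b \<longrightarrow> le D (cd D f) (sig f a) (sig f b)) \<and>
        (\<forall>a\<in>PA D (dm D f). le D (dm D f) a (re D f (sig f a))) \<and>
        (\<forall>b\<in>PA D (cd D f). le D (cd D f) (sig f (re D f b)) b)) \<and>
     (\<forall>f g h k. f \<in> Cls \<longrightarrow> is_pullback D h g f k \<longrightarrow>
        (\<forall>x\<in>PA D (cd D f). re D h (sig f (re D f x)) = sig g (re D k (re D f x))))"

end

theory Submission
  imports Defs
begin

lemma prim_fun: "primary D \<Longrightarrow> is_functor_to_Pos D"
  by (simp add: primary_def doctrine_def)
lemma prim_cat: "primary D \<Longrightarrow> is_category D"
  by (simp add: primary_def doctrine_def)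

lemma le_refl': "is_functor_to_Pos D \<Longrightarrow> x \<in> PA D A \<Longrightarrow> le D A x x"
  by (simp add: is_functor_to_Pos_def)
lemma le_trans': "is_functor_to_Pos D \<Longrightarrow> x \<in> PA D A \<Longrightarrow> y \<in> PA D A \<Longrightarrow> z \<in> PA D A
  \<Longrightarrow> le D A x y \<Longrightarrow> le D A y z \<Longrightarrow> le D A x z"
  unfolding is_functor_to_Pos_def by blast
lemma le_antisym': "is_functor_to_Pos D \<Longrightarrow> x \<in> PA D A \<Longrightarrow> y \<in> PA D A
  \<Longrightarrow> le D A x y \<Longrightarrow> le D A y x \<Longrightarrow> x = y"
  unfolding is_functor_to_Pos_def by blast

lemma meet_le: "is_functor_to_Pos D \<Longrightarrow> x \<in> PA D A \<Longrightarrow> y \<in> PA D A \<Longrightarrow> le D A x y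
  \<Longrightarrow> is_meet D A x y x"
  unfolding is_meet_def by (simp add: le_refl')

lemma meet_eq: "is_functor_to_Pos D \<Longrightarrow> x \<in> PA D A \<Longrightarrow> y \<in> PA D A \<Longrightarrow> le D A x y
  \<Longrightarrow> is_meet D A x y m \<Longrightarrow> m = x"
  unfolding is_meet_def by (meson le_antisym' le_refl')

lemma neg_le_iff: "has_negation D neg \<Longrightarrow> a \<in> PA D A \<Longrightarrow> b \<in> PA D A \<Longrightarrow>
   le D A a (neg A b) \<longleftrightarrow> (\<forall>m. is_meet D A a b m \<longrightarrow> is_bot D A m)"
  unfolding has_negation_def by blast

lemma neg_in: "has_negation D neg \<Longrightarrow> a \<in> PA D A \<Longrightarrow> neg A a \<in> PA D A"
  unfolding has_negation_def by blast

lemma neg_re: "has_negation D neg \<Longrightarrow> a \<in> PA D (cd D f) \<Longrightarrow>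
   re D f (neg (cd D f) a) = neg (dm D f) (re D f a)"
  unfolding has_negation_def by blast

lemma top_neg_bot:
  assumes F: "is_functor_to_Pos D" and N: "has_negation D neg" and t: "is_top D A t"
  shows "is_bot D A (neg A t)"
proof -
  have tP: "t \<in> PA D A" using t by (simp add: is_top_def)
  have nP: "neg A t \<in> PA D A" using neg_in[OF N tP] .
  have "le D A (neg A t) (neg A t)" using le_refl'[OF F nP] .
  hence "\<forall>m. is_meet D A (neg A t) t m \<longrightarrow> is_bot D A m" using neg_le_iff[OF N nP tP] by blast
  moreover have "is_meet D A (neg A t) t (neg A t)"
    using meet_le[OF F nP tP] t nP by (simp add: is_top_def)
  ultimately show ?thesis by blast
qed

lemma negtop_bot:
  assumes F: "is_functor_to_Pos D" and N: "has_negation D neg" and xP: "x \<in> PA D A"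
    and t: "is_top D A (neg A x)"
  shows "is_bot D A x"
proof -
  have "le D A x (neg A x)" using t xP by (simp add: is_top_def)
  hence "\<forall>m. is_meet D A x x m \<longrightarrow> is_bot D A m" using neg_le_iff[OF N xP xP] by blast
  moreover have "is_meet D A x x x" using meet_le[OF F xP xP le_refl'[OF F xP]] .
  ultimately show ?thesis by blast
qed

lemma bot_neg_top:
  assumes F: "is_functor_to_Pos D" and N: "has_negation D neg" and b: "is_bot D A b"
  shows "is_top D A (neg A b)"
proof -
  have bP: "b \<in> PA D A" using b by (simp add: is_bot_def)
  have "le D A z (neg A b)" if zP: "z \<in> PA D A" for z
  proof -
    have "is_bot D A m" if "is_meet D A z b m" for m
    proof -
      have "m = b" using that b le_antisym'[OF F] bP unfolding is_meet_def is_bot_def by blast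
      thus ?thesis using b by simp
    qed
    thus ?thesis using neg_le_iff[OF N zP bP] by blast
  qed
  thus ?thesis using neg_in[OF N bP] by (simp add: is_top_def)
qed

lemma neg_anti:
  assumes F: "is_functor_to_Pos D" and N: "has_negation D neg"
    and aP: "a \<in> PA D A" and bP: "b \<in> PA D A" and ab: "le D A a b"
  shows "le D A (neg A b) (neg A a)"
proof -
  have nbP: "neg A b \<in> PA D A" using neg_in[OF N bP] .
  have "is_bot D A m" if m: "is_meet D A (neg A b) a m" for m
  proof -
    have mP: "m \<in> PA D A" and m1: "le D A m (neg A b)" and m2: "le D A m a"
      using m by (auto simp: is_meet_def)
    have mb: "le D A m b" using le_trans'[OF F mP aP bP m2 ab] .
    have "is_meet D A m b m" using meet_le[OF F mP bP mb] .
    thus ?thesis using m1 neg_le_iff[OF N mP bP] by blast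
  qed
  thus ?thesis using neg_le_iff[OF N nbP aP] by blast
qed

lemma le_negneg:
  assumes F: "is_functor_to_Pos D" and N: "has_negation D neg" and aP: "a \<in> PA D A"
  shows "le D A a (neg A (neg A a))"
proof -
  have naP: "neg A a \<in> PA D A" using neg_in[OF N aP] .
  have "is_bot D A m" if m: "is_meet D A a (neg A a) m" for m
  proof -
    have mP: "m \<in> PA D A" and m1: "le D A m (neg A a)" and m2: "le D A m a"
      using m by (auto simp: is_meet_def)
    have "is_meet D A m a m" using meet_le[OF F mP aP m2] .
    thus ?thesis using m1 neg_le_iff[OF N mP aP] by blast
  qed
  thus ?thesis using neg_le_iff[OF N aP naP] by blast
qed

lemma top_up: "is_functor_to_Pos D \<Longrightarrow> is_top D A t \<Longrightarrow> y \<in> PA D A \<Longrightarrow> le D A t y \<Longrightarrow> is_top D A y"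
  unfolding is_top_def by (meson le_trans')

lemma re_in: "is_functor_to_Pos D \<Longrightarrow> x \<in> PA D (cd D f) \<Longrightarrow> re D f x \<in> PA D (dm D f)"
  unfolding is_functor_to_Pos_def by blast
lemma re_mono: "is_functor_to_Pos D \<Longrightarrow> x \<in> PA D (cd D f) \<Longrightarrow> y \<in> PA D (cd D f) \<Longrightarrow>
  le D (cd D f) x y \<Longrightarrow> le D (dm D f) (re D f x) (re D f y)"
  unfolding is_functor_to_Pos_def by blast
lemma re_comp: "is_functor_to_Pos D \<Longrightarrow> cd D f = dm D g \<Longrightarrow> x \<in> PA D (cd D g) \<Longrightarrow>
  re D (comp D g f) x = re D f (re D g x)"
  unfolding is_functor_to_Pos_def by blast

lemma part1:
  assumes P: "primary D" and C: "is_comprehension D cmp" and N: "has_negation D neg"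
  shows "is_cocomprehension D (\<lambda>A a. cmp A (neg A a))"
proof -
  have F: "is_functor_to_Pos D" using prim_fun[OF P] .
  have K: "is_category D" using prim_cat[OF P] .
  have C1: "cd D (cmp A b) = A" "is_top D (dm D (cmp A b)) (re D (cmp A b) b)"
    "\<And>f. cd D f = A \<Longrightarrow> is_top D (dm D f) (re D f b) \<Longrightarrow>
           (\<exists>!k. dm D k = dm D f \<and> cd D k = dm D (cmp A b) \<and> comp D (cmp A b) k = f)"
    if "b \<in> PA D A" for A b using C that unfolding is_comprehension_def by blast+
  have topre: "\<And>f t. is_top D (cd D f) t \<Longrightarrow> is_top D (dm D f) (re D f t)"
    using C unfolding is_comprehension_def by blast
  have bots: "\<forall>A. \<exists>b. is_bot D A b" using N unfolding has_negation_def by blast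
  have main: "cd D (cmp A (neg A a)) = A \<and>
        is_bot D (dm D (cmp A (neg A a))) (re D (cmp A (neg A a)) a) \<and>
        (\<forall>f. cd D f = A \<and> is_bot D (dm D f) (re D f a) \<longrightarrow>
           (\<exists>!k. dm D k = dm D f \<and> cd D k = dm D (cmp A (neg A a)) \<and> comp D (cmp A (neg A a)) k = f)) \<and>
        is_monic D (cmp A (neg A a))" if aP: "a \<in> PA D A" for A a
  proof -
    have naP: "neg A a \<in> PA D A" using neg_in[OF N aP] .
    have cd: "cd D (cmp A (neg A a)) = A" using C1(1)[OF naP] .
  show ?thesis
  proof (intro conjI allI impI)
    show "cd D (cmp A (neg A a)) = A" using cd .
  next
    have aP': "a \<in> PA D (cd D (cmp A (neg A a)))" using cd aP by simp
    have "re D (cmp A (neg A a)) (neg A a) = neg (dm D (cmp A (neg A a))) (re D (cmp A (neg A a)) a)" using neg_re[OF N aP'] cd by simp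
    hence "is_top D (dm D (cmp A (neg A a))) (neg (dm D (cmp A (neg A a))) (re D (cmp A (neg A a)) a))" using C1(2)[OF naP] by simp
    thus "is_bot D (dm D (cmp A (neg A a))) (re D (cmp A (neg A a)) a)" using negtop_bot[OF F N re_in[OF F aP']] by blast
  next
    fix f assume "cd D f = A \<and> is_bot D (dm D f) (re D f a)"
    hence cf: "cd D f = A" and b: "is_bot D (dm D f) (re D f a)" by auto
    have aP': "a \<in> PA D (cd D f)" using cf aP by simp
    have "re D f (neg A a) = neg (dm D f) (re D f a)" using neg_re[OF N aP'] cf by simp
    hence "is_top D (dm D f) (re D f (neg A a))" using bot_neg_top[OF F N b] by simp
    thus "\<exists>!k. dm D k = dm D f \<and> cd D k = dm D (cmp A (neg A a)) \<and> comp D (cmp A (neg A a)) k = f"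
      using C1(3)[OF naP cf] by blast
  next
    show "is_monic D (cmp A (neg A a))" unfolding is_monic_def
    proof (intro allI impI)
      fix u v assume u: "cd D u = dm D (cmp A (neg A a))" and v: "cd D v = dm D (cmp A (neg A a))" and uv: "dm D u = dm D v"
        and e: "comp D (cmp A (neg A a)) u = comp D (cmp A (neg A a)) v"
      let ?f = "comp D (cmp A (neg A a)) u"
      have df: "dm D ?f = dm D u" and cf: "cd D ?f = A"
        using K u cd unfolding is_category_def by auto
      have naP': "neg A a \<in> PA D (cd D (cmp A (neg A a)))" using naP cd by simp
      have "re D ?f (neg A a) = re D u (re D (cmp A (neg A a)) (neg A a))" using re_comp[OF F u naP'] .
      moreover have "is_top D (dm D u) (re D u (re D (cmp A (neg A a)) (neg A a)))"
        using topre[of u] C1(2)[OF naP] u by simp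
      ultimately have "is_top D (dm D ?f) (re D ?f (neg A a))" using df by simp
      then have "\<exists>!k. dm D k = dm D ?f \<and> cd D k = dm D (cmp A (neg A a)) \<and> comp D (cmp A (neg A a)) k = ?f"
        using C1(3)[OF naP cf] by blast
      thus "u = v" using df u v uv e by metis
    qed
  qed
  qed
  have fac: "factors_through D (cmp A (neg A b)) (cmp A (neg A a))"
    if aP: "a \<in> PA D A" and bP: "b \<in> PA D A" and ab: "le D A a b" for A a b
  proof -
    let ?f = "cmp A (neg A b)"
    have naP: "neg A a \<in> PA D A" using neg_in[OF N aP] .
    have nbP: "neg A b \<in> PA D A" using neg_in[OF N bP] .
    have cf: "cd D ?f = A" using C1(1)[OF nbP] .
    have le1: "le D A (neg A b) (neg A a)" using neg_anti[OF F N aP bP ab] .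
    have "le D (dm D ?f) (re D ?f (neg A b)) (re D ?f (neg A a))"
      using re_mono[OF F, of "neg A b" ?f "neg A a"] cf nbP naP le1 by simp
    moreover have "re D ?f (neg A a) \<in> PA D (dm D ?f)" using re_in[OF F, of "neg A a" ?f] cf naP by simp
    ultimately have "is_top D (dm D ?f) (re D ?f (neg A a))"
      using top_up[OF F C1(2)[OF nbP]] by blast
    then obtain k where "dm D k = dm D ?f \<and> cd D k = dm D (cmp A (neg A a)) \<and> comp D (cmp A (neg A a)) k = ?f"
      using C1(3)[OF naP cf] by blast
    thus ?thesis unfolding factors_through_def by blast
  qed
  show ?thesis unfolding is_cocomprehension_def using bots main fac by blast
qed

lemma part2:
  assumes N: "has_negation D neg"
    and S: "restricted_sigma D (arrow_class D cmp) sig"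
  shows "restricted_sigma D (arrow_class D (\<lambda>A a. cmp A (neg A a))) sig"
proof -
  have "arrow_class D (\<lambda>A a. cmp A (neg A a)) \<subseteq> arrow_class D cmp"
    unfolding arrow_class_def using neg_in[OF N] by blast
  thus ?thesis using S unfolding restricted_sigma_def by blast
qed

lemma part3a:
  assumes P: "primary D" and N: "has_negation D neg" and CC: "full_cocomprehension D cc"
  shows "classical D neg"
proof -
  have F: "is_functor_to_Pos D" using prim_fun[OF P] .
  have CC1: "cd D (cc A b) = A" "is_bot D (dm D (cc A b)) (re D (cc A b) b)"
    "\<And>f. cd D f = A \<Longrightarrow> is_bot D (dm D f) (re D f b) \<Longrightarrow>
           (\<exists>!k. dm D k = dm D f \<and> cd D k = dm D (cc A b) \<and> comp D (cc A b) k = f)"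
    if "b \<in> PA D A" for A b using CC that unfolding full_cocomprehension_def is_cocomprehension_def by blast+
  have full: "\<And>A a b. a \<in> PA D A \<Longrightarrow> b \<in> PA D A \<Longrightarrow> factors_through D (cc A b) (cc A a) \<Longrightarrow> le D A a b"
    using CC unfolding full_cocomprehension_def by blast
  have "neg A (neg A a) = a" if aP: "a \<in> PA D A" for A a
  proof -
    let ?f = "cc A a" and ?X = "dm D (cc A a)"
    have naP: "neg A a \<in> PA D A" using neg_in[OF N aP] .
    have nnaP: "neg A (neg A a) \<in> PA D A" using neg_in[OF N naP] .
    have cf: "cd D ?f = A" using CC1(1)[OF aP] .
    have "re D ?f (neg A (neg A a)) = neg ?X (re D ?f (neg A a))"
      using neg_re[OF N, of "neg A a" ?f] naP cf by simp
    also have "re D ?f (neg A a) = neg ?X (re D ?f a)"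
      using neg_re[OF N, of a ?f] aP cf by simp
    finally have eq: "re D ?f (neg A (neg A a)) = neg ?X (neg ?X (re D ?f a))" .
    have "is_bot D ?X (neg ?X (neg ?X (re D ?f a)))"
      using top_neg_bot[OF F N bot_neg_top[OF F N CC1(2)[OF aP]]] .
    hence "is_bot D (dm D ?f) (re D ?f (neg A (neg A a)))" using eq by simp
    then obtain k where "dm D k = dm D ?f \<and> cd D k = dm D (cc A (neg A (neg A a))) \<and> comp D (cc A (neg A (neg A a))) k = ?f"
      using CC1(3)[OF nnaP cf] by blast
    hence "factors_through D (cc A a) (cc A (neg A (neg A a)))" unfolding factors_through_def by blast
    hence "le D A (neg A (neg A a)) a" using full[OF nnaP aP] by blast
    thus ?thesis using le_antisym'[OF F nnaP aP] le_negneg[OF F N aP] by blast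
  qed
  thus ?thesis using N unfolding classical_def by blast
qed

lemma part3b:
  assumes P: "primary D" and C: "full_comprehension D cmp" and Cl: "classical D neg"
  shows "full_cocomprehension D (\<lambda>A a. cmp A (neg A a))"
proof -
  have F: "is_functor_to_Pos D" using prim_fun[OF P] .
  have N: "has_negation D neg" using Cl by (simp add: classical_def)
  have co: "is_cocomprehension D (\<lambda>A a. cmp A (neg A a))"
    using part1[OF P _ N] C by (simp add: full_comprehension_def)
  have "le D A a b" if aP: "a \<in> PA D A" and bP: "b \<in> PA D A"
    and fa: "factors_through D (cmp A (neg A b)) (cmp A (neg A a))" for A a b
  proof -
    have naP: "neg A a \<in> PA D A" using neg_in[OF N aP] .
    have nbP: "neg A b \<in> PA D A" using neg_in[OF N bP] .
    have "le D A (neg A b) (neg A a)" using C fa naP nbP unfolding full_comprehension_def by blast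
    hence "le D A (neg A (neg A a)) (neg A (neg A b))" using neg_anti[OF F N nbP naP] by blast
    thus ?thesis using Cl aP bP unfolding classical_def by simp
  qed
  thus ?thesis using co unfolding full_cocomprehension_def by blast
qed

theorem mainTheorem4:
  fixes D :: "('o, 'a, 'p) doctrine"
    and neg :: "'o \<Rightarrow> 'p \<Rightarrow> 'p"
    and cmp :: "'o \<Rightarrow> 'p \<Rightarrow> 'a"
  assumes "primary D"
    and "is_comprehension D cmp"
    and "has_negation D neg"
  shows "is_cocomprehension D (\<lambda>A a. cmp A (neg A a))
     \<and> ((\<exists>sig. restricted_sigma D (arrow_class D cmp) sig) \<longrightarrow>
          (\<exists>sig. restricted_sigma D (arrow_class D (\<lambda>A a. cmp A (neg A a))) sig))
     \<and> (full_comprehension D cmp \<longrightarrow>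
          ((\<exists>cc. full_cocomprehension D cc) \<longleftrightarrow> classical D neg))"
  using part1[OF assms] part2[OF assms(3)] part3a[OF assms(1) assms(3)] part3b[OF assms(1)]
  by blast

end
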